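(* Let $\mu,\nu$ be Borel probability measures on $\mathbb R$ such that $\operatorname{diam}\operatorname{supp}\mu=\operatorname{diam}\operatorname{supp}\nu<\infty$ and $\mu\prec\nu$. Then the mm-spaces $(\mathbb R,|\cdot|,\mu)$ and $(\mathbb R,|\cdot|,\nu)$ are mm-isomorphic.
   Context: An mm-space is a triple $(X,d_X,\mu_X)$ where $(X,d_X)$ is a complete separable metric space and $\mu_X$ is a Borel probability measure. Two mm-spaces $X,Y$ are mm-isomorphic if there is an isometry $f:\operatorname{supp}\mu_X\to\operatorname{supp}\mu_Y$ with $f_*\mu_X=\mu_Y$. For mm-spaces, $Y\prec X$ if there is a 1-Lipschitz map $f:\operatorname{supp}\mu_X\to\operatorname{supp}\mu_Y$ with $f_*\mu_X=\mu_Y$. For Borel probability measures $\mu,\nu$ on $\mathbb R$, $\mu\prec\nu$ means $(\mathbb R,|\cdot|,\mu)\prec(\mathbb R,|\cdot|,\nu)$. The diameter of a set $A$ is $\sup_{x,y\in A}|x-y|$. *)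

theory Defs
  imports "HOL-Probability.Probability"
begin

text \<open>Support of a Borel measure on a metric space: points all of whose open
  balls have positive measure (equivalently the smallest closed set of full measure
  in a separable space).\<close>
definition msupp :: "'a::metric_space measure \<Rightarrow> 'a set" where
  "msupp M = {x. \<forall>e>0. emeasure M (ball x e) > 0}"

definition pushes_to :: "('a::metric_space \<Rightarrow> 'b::metric_space) \<Rightarrow> 'a measure \<Rightarrow> 'b measure \<Rightarrow> bool" where
  "pushes_to f N M \<longleftrightarrow> (\<forall>A \<in> sets M. emeasure M A = emeasure N {x \<in> msupp N. f x \<in> A})"

definition lip_dom :: "real measure \<Rightarrow> real measure \<Rightarrow> bool" where
  "lip_dom \<mu> \<nu> \<longleftrightarrow> (\<exists>f. f ` msupp \<nu> \<subseteq> msupp \<mu>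
      \<and> (\<forall>x\<in>msupp \<nu>. \<forall>y\<in>msupp \<nu>. dist (f x) (f y) \<le> dist x y)
      \<and> pushes_to f \<nu> \<mu>)"

definition mm_iso :: "real measure \<Rightarrow> real measure \<Rightarrow> bool" where
  "mm_iso \<mu> \<nu> \<longleftrightarrow> (\<exists>f. f ` msupp \<mu> = msupp \<nu>
      \<and> (\<forall>x\<in>msupp \<mu>. \<forall>y\<in>msupp \<mu>. dist (f x) (f y) = dist x y)
      \<and> pushes_to f \<mu> \<nu>)"

end

theory Submission
  imports Defs
begin

lemma msupp_compl:
  fixes M :: "real measure"
  assumes "sets M = sets borel"
  shows "UNIV - msupp M = \<Union>{ball x e | x e. e > 0 \<and> emeasure M (ball x e) = 0}"
proof
  show "UNIV - msupp M \<subseteq> \<Union>{ball x e | x e. e > 0 \<and> emeasure M (ball x e) = 0}"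
  proof
    fix x assume "x \<in> UNIV - msupp M"
    then obtain e where "e > 0" "\<not> emeasure M (ball x e) > 0" by (auto simp: msupp_def)
    then show "x \<in> \<Union>{ball x e | x e. e > 0 \<and> emeasure M (ball x e) = 0}"
      by (auto simp: not_gr_zero intro!: exI[of _ "ball x e"])
  qed
next
  show "\<Union>{ball x e | x e. e > 0 \<and> emeasure M (ball x e) = 0} \<subseteq> UNIV - msupp M"
  proof
    fix y assume "y \<in> \<Union>{ball x e | x e. e > 0 \<and> emeasure M (ball x e) = 0}"
    then obtain x e where xe: "e > 0" "emeasure M (ball x e) = 0" "y \<in> ball x e" by auto
    define d where "d = e - dist x y"
    have d: "d > 0" using xe by (auto simp: d_def)
    have sub: "ball y d \<subseteq> ball x e" unfolding d_def
      by (smt (verit) dist_triangle mem_ball subsetI)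
    have "emeasure M (ball y d) \<le> emeasure M (ball x e)"
      by (rule emeasure_mono[OF sub]) (simp add: assms)
    then have "emeasure M (ball y d) = 0" using xe by simp
    then show "y \<in> UNIV - msupp M" using d by (auto simp: msupp_def intro!: exI[of _ d])
  qed
qed

lemma msupp_null:
  fixes M :: "real measure"
  assumes "sets M = sets borel"
  shows "UNIV - msupp M \<in> null_sets M"
proof -
  let ?F = "{ball x e | x e. e > 0 \<and> emeasure M (ball x e) = 0}"
  obtain F' where F': "F' \<subseteq> ?F" "countable F'" "\<Union>F' = \<Union>?F"
    using Lindelof[of ?F] by auto
  have "(\<Union>i\<in>F'. id i) \<in> null_sets M"
  proof (rule null_sets_UN'[OF F'(2)])
    fix i assume "i \<in> F'"
    then obtain x e where "i = ball x e" "emeasure M (ball x e) = 0" using F'(1) by auto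
    then show "id i \<in> null_sets M" using assms by (auto simp: null_sets_def)
  qed
  then show ?thesis using F'(3) msupp_compl[OF assms] by simp
qed

lemma msupp_closed:
  fixes M :: "real measure"
  assumes "sets M = sets borel"
  shows "closed (msupp M)"
proof -
  have "open (UNIV - msupp M)" unfolding msupp_compl[OF assms] by auto
  then show ?thesis by (simp add: closed_def Compl_eq_Diff_UNIV)
qed

theorem lemma4p1:
  fixes \<mu> \<nu> :: "real measure"
  assumes "prob_space \<mu>" and "sets \<mu> = sets borel"
    and "prob_space \<nu>" and "sets \<nu> = sets borel"
    and "bounded (msupp \<mu>)" and "bounded (msupp \<nu>)"
    and "diameter (msupp \<mu>) = diameter (msupp \<nu>)"
    and "lip_dom \<mu> \<nu>"
  shows "mm_iso \<mu> \<nu>"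
proof -
  define S where "S = msupp \<nu>"
  define T where "T = msupp \<mu>"
  obtain f where fS: "f ` S \<subseteq> T" and lip: "\<And>x y. x \<in> S \<Longrightarrow> y \<in> S \<Longrightarrow> dist (f x) (f y) \<le> dist x y"
    and push: "pushes_to f \<nu> \<mu>"
    using assms(8) unfolding lip_dom_def S_def T_def by blast
  have Sc: "compact S" using msupp_closed[OF assms(4)] assms(6)
    unfolding S_def by (simp add: compact_eq_bounded_closed)
  have Sne: "S \<noteq> {}"
  proof
    assume "S = {}"
    then have "UNIV \<in> null_sets \<nu>" using msupp_null[OF assms(4)] unfolding S_def by simp
    then show False using prob_space.emeasure_space_1[OF assms(3)]
      by (simp add: null_sets_def sets_eq_imp_space_eq[OF assms(4)])
  qed
  have fcont: "continuous_on S f"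
    unfolding continuous_on_iff
  proof (intro ballI allI impI)
    fix x e assume "x \<in> S" "(0::real) < e"
    then show "\<exists>d>0. \<forall>x'\<in>S. dist x' x < d \<longrightarrow> dist (f x') (f x) < e"
    proof (intro exI[of _ e] conjI ballI impI)
      fix x' assume "x' \<in> S" "dist x' x < e"
      then show "dist (f x') (f x) < e" using lip[of x' x] \<open>x \<in> S\<close> by linarith
    qed (rule \<open>0 < e\<close>)
  qed
  have fSc: "compact (f ` S)" using compact_continuous_image[OF fcont Sc] .
  have TfS: "T \<subseteq> f ` S"
  proof
    fix y assume yT: "y \<in> T"
    show "y \<in> f ` S"
    proof (rule ccontr)
      assume "y \<notin> f ` S"
      moreover have "open (- (f ` S))" using compact_imp_closed[OF fSc] by (simp add: closed_def)
      ultimately obtain e where e0: "e > 0" "ball y e \<subseteq> - (f ` S)"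
        unfolding open_contains_ball by blast
      then have e: "e > 0" "ball y e \<inter> f ` S = {}" by auto
      have "emeasure \<mu> (ball y e) = emeasure \<nu> {x \<in> msupp \<nu>. f x \<in> ball y e}"
        using push assms(2) unfolding pushes_to_def by auto
      also have "{x \<in> msupp \<nu>. f x \<in> ball y e} = {}" using e unfolding S_def by auto
      finally have "emeasure \<mu> (ball y e) = 0" by simp
      then show False using yT e unfolding T_def msupp_def by auto
    qed
  qed
  have TeqfS: "T = f ` S" using TfS fS by auto
  have Tc: "compact T" using fSc TeqfS by simp
  define D where "D = diameter S"
  obtain p q where pq: "p \<in> S" "q \<in> S" "dist (f p) (f q) = D"
    using diameter_compact_attained[OF Tc] Sne assms(7) TeqfS unfolding D_def S_def T_def by auto
  have bndS: "\<And>x y. x \<in> S \<Longrightarrow> y \<in> S \<Longrightarrow> dist x y \<le> D"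
    unfolding D_def using diameter_bounded_bound[OF assms(6)] S_def by auto
  define s :: real where "s = (if (p \<le> q) = (f p \<le> f q) then 1 else -1)"
  define c where "c = f p - s * p"
  have s2: "s * s = 1" unfolding s_def by auto
  have fform: "f x = c + s * x" if x: "x \<in> S" for x
  proof -
    have h1: "\<bar>f x - f p\<bar> \<le> \<bar>x - p\<bar>" using lip[OF x pq(1)] by (simp add: dist_real_def)
    have h2: "\<bar>f x - f q\<bar> \<le> \<bar>x - q\<bar>" using lip[OF x pq(2)] by (simp add: dist_real_def)
    have h3: "\<bar>f p - f q\<bar> = D" using pq(3) by (simp add: dist_real_def)
    have h4: "\<bar>x - p\<bar> \<le> D" "\<bar>x - q\<bar> \<le> D" "\<bar>p - q\<bar> \<le> D"
      using bndS[OF x pq(1)] bndS[OF x pq(2)] bndS[OF pq(1) pq(2)] by (auto simp: dist_real_def)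
    have h5: "\<bar>f p - f q\<bar> \<le> \<bar>p - q\<bar>" using lip[OF pq(1) pq(2)] by (simp add: dist_real_def)
    show ?thesis
    proof (cases "(p \<le> q) = (f p \<le> f q)")
      case True
      then have "s = 1" unfolding s_def by simp
      moreover have "f x = f p - p + x" using True h1 h2 h3 h4 h5 by (smt (verit))
      ultimately show ?thesis unfolding c_def by simp
    next
      case False
      then have "s = -1" unfolding s_def by simp
      moreover have "f x = f p + p - x" using False h1 h2 h3 h4 h5 by (smt (verit))
      ultimately show ?thesis unfolding c_def by simp
    qed
  qed
  define g where "g y = s * (y - c)" for y
  have gf: "g (f x) = x" if "x \<in> S" for x
    using fform[OF that] s2 unfolding g_def by (simp add: algebra_simps)
  have gT: "g ` T = S" unfolding TeqfS image_image using gf by (simp cong: image_cong)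
  have giso: "dist (g x) (g y) = dist x y" for x y
  proof -
    have "\<bar>s\<bar> = 1" unfolding s_def by auto
    then show ?thesis unfolding g_def dist_real_def
      by (metis abs_mult mult.left_neutral right_diff_distrib diff_diff_eq2 diff_diff_cancel
          diff_add_cancel diff_diff_eq)
  qed
  have gmeas: "g \<in> borel_measurable borel" unfolding g_def by measurable
  have "pushes_to g \<mu> \<nu>"
    unfolding pushes_to_def
  proof
    fix A assume A: "A \<in> sets \<nu>"
    then have Ab: "A \<in> sets borel" using assms(4) by simp
    define B where "B = {y \<in> T. g y \<in> A}"
    have Bb: "B \<in> sets \<mu>" unfolding assms(2) B_def
    proof -
      have "{y \<in> T. g y \<in> A} = T \<inter> (g -` A \<inter> space borel)" by auto
      moreover have "g -` A \<inter> space borel \<in> sets borel" using measurable_sets[OF gmeas Ab] .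
      moreover have "T \<in> sets borel" using msupp_closed[OF assms(2)] unfolding T_def by simp
      ultimately show "{y \<in> T. g y \<in> A} \<in> sets borel" by simp
    qed
    have "emeasure \<mu> B = emeasure \<nu> {x \<in> msupp \<nu>. f x \<in> B}"
      using push Bb unfolding pushes_to_def by auto
    also have "{x \<in> msupp \<nu>. f x \<in> B} = S \<inter> A"
      unfolding B_def S_def using gf fS S_def by auto
    also have "emeasure \<nu> (S \<inter> A) = emeasure \<nu> A"
    proof -
      have "A \<subseteq> (S \<inter> A) \<union> (UNIV - S)" by auto
      have SA: "S \<inter> A \<in> sets \<nu>" using msupp_closed[OF assms(4)] A assms(4) unfolding S_def by simp
      have "emeasure \<nu> A \<le> emeasure \<nu> ((S \<inter> A) \<union> (UNIV - S))"
        using msupp_null[OF assms(4)] SA A unfolding S_def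
        by (intro emeasure_mono) auto
      also have "\<dots> \<le> emeasure \<nu> (S \<inter> A) + emeasure \<nu> (UNIV - S)"
        using msupp_null[OF assms(4)] SA unfolding S_def by (intro emeasure_subadditive) auto
      also have "\<dots> = emeasure \<nu> (S \<inter> A)"
        using msupp_null[OF assms(4)] unfolding S_def by (simp add: null_sets_def)
      finally have "emeasure \<nu> A \<le> emeasure \<nu> (S \<inter> A)" .
      moreover have "emeasure \<nu> (S \<inter> A) \<le> emeasure \<nu> A" using A by (intro emeasure_mono) auto
      ultimately show ?thesis by simp
    qed
    finally show "emeasure \<nu> A = emeasure \<mu> {x \<in> msupp \<mu>. g x \<in> A}"
      unfolding B_def T_def by simp
  qed
  then show ?thesis unfolding mm_iso_def using gT giso unfolding S_def T_def by blast
qed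

end
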